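(* Let $Q=\triangle ABC$ be a triangle with angle $\pi/n$ at $A$ and angle $m\pi/n$ at $B$, where $n$ is even and $m$ is a positive integer with $m<n-1$. Then there is no billiard trajectory in $Q$ starting at $A$ and returning to $A$.
   Context: A billiard trajectory in a polygon is a path of straight segments inside the polygon reflecting off the interiors of edges with angle of incidence equal to angle of reflection; here it emanates from the vertex $A$, and a trajectory returning to $A$ means one whose endpoint is $A$ (trajectories stop when they hit a vertex). *)

theory Defs
  imports "HOL-Analysis.Analysis"
begin

definition vertex_angle :: "complex \<Rightarrow> complex \<Rightarrow> complex \<Rightarrow> real" where
  "vertex_angle P Q R = arccos (((P - Q) \<bullet> (R - Q)) / (norm (P - Q) * norm (R - Q)))"

definition reflect_dir :: "complex \<Rightarrow> complex \<Rightarrow> complex" where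
  "reflect_dir u z = (u / of_real (norm u))\<^sup>2 * cnj z"

definition on_edge_interior :: "complex \<Rightarrow> complex \<Rightarrow> complex \<Rightarrow> complex \<Rightarrow> complex \<Rightarrow> bool" where
  "on_edge_interior A B C p u \<longleftrightarrow>
     (p \<in> open_segment A B \<and> u = B - A) \<or>
     (p \<in> open_segment B C \<and> u = C - B) \<or>
     (p \<in> open_segment C A \<and> u = A - C)"

definition billiard_return_A :: "complex \<Rightarrow> complex \<Rightarrow> complex \<Rightarrow> nat \<Rightarrow> (nat \<Rightarrow> complex) \<Rightarrow> bool" where
  "billiard_return_A A B C k p \<longleftrightarrow>
     k \<ge> 1 \<and> p 0 = A \<and> p k = A \<and>
     (\<forall>i<k. p i \<noteq> p (Suc i) \<and>
            open_segment (p i) (p (Suc i)) \<subseteq> interior (convex hull {A, B, C})) \<and>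
     (\<forall>i. 0 < i \<and> i < k \<longrightarrow>
        (\<exists>u. on_edge_interior A B C (p i) u \<and>
             (p (Suc i) - p i) / of_real (norm (p (Suc i) - p i)) =
               reflect_dir u ((p i - p (i - 1)) / of_real (norm (p i - p (i - 1))))))"

end

theory Submission
  imports Defs
begin


lemma unit_cos:
  fixes z :: complex
  assumes "norm z = 1" "Re z = cos a" "0 \<le> a" "a \<le> pi"
  shows "z = cis a \<or> z = cis (-a)"
proof -
  have "(Re z)^2 + (Im z)^2 = 1" using assms(1) by (simp add: cmod_def)
  hence "(Im z)^2 = (sin a)^2" using assms(2) sin_squared_eq[of a] by simp
  hence "Im z = sin a \<or> Im z = - sin a"
    by (metis power2_eq_iff)
  thus ?thesis using assms(2) by (auto intro: complex_eqI)
qed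


lemma pos_comb_arg:
  fixes y :: complex
  assumes "norm y = 1" "y = of_real \<alpha> + of_real \<beta> * cis c" "0 < \<alpha>" "0 < \<beta>" "0 < c" "c < pi"
  shows "\<exists>\<theta>. 0 < \<theta> \<and> \<theta> < c \<and> y = cis \<theta>"
proof -
  define \<theta> where "\<theta> = Arg y"
  have y0: "y \<noteq> 0" using assms(1) by auto
  have "cis \<theta> = sgn y" unfolding \<theta>_def by (rule cis_Arg[OF y0])
  also have "sgn y = y" using assms(1) by (simp add: sgn_div_norm)
  finally have yc: "y = cis \<theta>" by simp
  have sc: "sin c > 0" using assms(5,6) by (intro sin_gt_zero)
  have "Im y = \<beta> * sin c" using assms(2) by simp
  hence "Im y > 0" using sc assms(4) by simp
  hence t1: "0 < \<theta>" "\<theta> < pi" using Arg_lt_pi unfolding \<theta>_def by blast+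
  have e1: "y * cnj (cis c) = cis (\<theta> - c)" unfolding yc cis_cnj cis_mult by (simp only: diff_conv_add_uminus)
  have e2: "Im (y * cnj (cis c)) = - (\<alpha> * sin c)"
    unfolding assms(2) by (simp add: algebra_simps)
  have "\<alpha> * sin c > 0" using sc assms(3) by simp
  hence neg: "sin (\<theta> - c) < 0" using e1 e2 by (metis cis.sel(2) neg_less_0_iff_less)
  show ?thesis
  proof (cases "\<theta> < c")
    case True thus ?thesis using t1 yc by blast
  next
    case False
    hence "0 \<le> \<theta> - c" "\<theta> - c \<le> pi" using t1 assms(5) by linarith+
    hence "sin (\<theta> - c) \<ge> 0" by (intro sin_ge_zero)
    thus ?thesis using neg by linarith
  qed
qed

lemma cis_pow_Im:
  assumes "0 < \<theta>" "\<theta> < pi / real n" "n > 0"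
  shows "Im (cis \<theta> ^ n) > 0"
proof -
  have "real n * \<theta> < pi" using assms by (simp add: field_simps)
  moreover have "0 < real n * \<theta>" using assms by simp
  ultimately have "sin (real n * \<theta>) > 0" by (intro sin_gt_zero)
  thus ?thesis by (simp add: Complex.DeMoivre)
qed


lemma cis_pow_inj:
  assumes "0 < \<theta>" "\<theta> < pi / real n" "0 < \<phi>" "\<phi> < pi / real n" "n > 0"
    and "cis \<theta> ^ n = cis \<phi> ^ n"
  shows "\<theta> = \<phi>"
proof -
  have n0: "real n > 0" using assms(5) by simp
  have l1: "real n * \<theta> < pi" using assms(2) n0 by (simp add: less_divide_eq mult.commute)
  have l2: "real n * \<phi> < pi" using assms(4) n0 by (simp add: less_divide_eq mult.commute)
  have ce: "cis (real n * \<theta>) = cis (real n * \<phi>)" using assms(6)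
    by (simp only: Complex.DeMoivre)
  have cc: "cos (real n * \<theta>) = cos (real n * \<phi>)"
    using arg_cong[where f=Re, OF ce] by (simp only: cis.sel)
  have "real n * \<theta> = real n * \<phi>"
    by (rule cos_inj_pi[OF _ _ _ _ cc]) (use l1 l2 n0 assms(1,3) in auto)
  thus ?thesis using n0 by simp
qed



lemma noncol_param:
  fixes P Q R :: complex
  assumes "\<not> collinear {P,Q,R}"
  shows "P \<noteq> Q" "(R - P) \<bullet> (\<i> * (Q - P)) \<noteq> 0"
proof -
  show pq: "P \<noteq> Q" using assms by auto
  show "(R - P) \<bullet> (\<i> * (Q - P)) \<noteq> 0"
  proof
    assume h: "(R - P) \<bullet> (\<i> * (Q - P)) = 0"
    define d where "d = R - P"
    define w where "w = Q - P"
    have w0: "w \<noteq> 0" using pq w_def by auto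
    have N: "(Re w)^2 + (Im w)^2 \<noteq> 0" using w0
      by (metis complex_eq_0 )
    have h': "Im d * Re w = Re d * Im w" using h unfolding d_def w_def inner_complex_def by (simp add: algebra_simps)
    define c where "c = (Re d * Re w + Im d * Im w) / ((Re w)^2 + (Im w)^2)"
    have "d = c *\<^sub>R w"
    proof (rule complex_eqI)
      show "Re d = Re (c *\<^sub>R w)" using N h' unfolding c_def
        by (simp add: field_simps power2_eq_square)
      show "Im d = Im (c *\<^sub>R w)" using N h' unfolding c_def
        by (simp add: field_simps power2_eq_square)
    qed
    hence "R - Q = (1 - c) *\<^sub>R (P - Q)" unfolding d_def w_def by (simp add: algebra_simps scaleR_conv_of_real)
    hence "collinear {0, P - Q, R - Q}" using collinear_lemma by blast
    hence "collinear {P,Q,R}" using collinear_3 by (metis collinear_3 NO_MATCH_def)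
    thus False using assms by simp
  qed
qed

lemma edge_not_interior:
  fixes P Q R x :: complex
  assumes "\<not> collinear {P,Q,R}" "x \<in> closed_segment P Q"
  shows "x \<notin> interior (convex hull {P,Q,R})"
proof
  assume xi: "x \<in> interior (convex hull {P,Q,R})"
  define v where "v = \<i> * (Q - P)"
  define fR where "fR = v \<bullet> (R - P)"
  have fR0: "fR \<noteq> 0" using noncol_param[OF assms(1)] unfolding fR_def v_def by (simp add: inner_commute)
  have v0: "v \<noteq> 0" using noncol_param[OF assms(1)] unfolding v_def by auto
  have vq: "v \<bullet> (Q - P) = 0" unfolding v_def inner_complex_def by (simp add: algebra_simps)
  define H where "H = {z. (fR *\<^sub>R v) \<bullet> z \<ge> (fR *\<^sub>R v) \<bullet> P}"
  have TH: "convex hull {P,Q,R} \<subseteq> H"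
  proof
    fix z assume "z \<in> convex hull {P,Q,R}"
    then obtain a b c where abc: "0 \<le> a" "0 \<le> b" "0 \<le> c" "a + b + c = 1"
       "z = a *\<^sub>R P + b *\<^sub>R Q + c *\<^sub>R R" unfolding convex_hull_3 by auto
    have aeq: "a = 1 - b - c" using abc by simp
    have "z - P = b *\<^sub>R (Q-P) + c *\<^sub>R (R-P)" using abc(5) unfolding aeq
      by (simp add: algebra_simps scaleR_conv_of_real)
    hence "v \<bullet> (z - P) = c * fR" using vq unfolding fR_def by (simp add: inner_add_right)
    hence "(fR *\<^sub>R v) \<bullet> z - (fR *\<^sub>R v) \<bullet> P = c * fR * fR" by (simp add: inner_diff_right algebra_simps)
    moreover have "c * fR * fR \<ge> 0" by (metis abc(3) mult.assoc mult_nonneg_nonneg zero_le_square)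
    ultimately show "z \<in> H" unfolding H_def by simp
  qed
  have "interior (convex hull {P,Q,R}) \<subseteq> interior H" using TH by (rule interior_mono)
  also have "\<dots> = {z. (fR *\<^sub>R v) \<bullet> z > (fR *\<^sub>R v) \<bullet> P}" unfolding H_def
    by (rule interior_halfspace_ge) (use fR0 v0 in simp)
  finally have gt: "(fR *\<^sub>R v) \<bullet> x > (fR *\<^sub>R v) \<bullet> P" using xi by auto
  obtain u where "x = (1 - u) *\<^sub>R P + u *\<^sub>R Q" using assms(2) in_segment(1) by blast
  hence "x - P = u *\<^sub>R (Q - P)" by (simp add: algebra_simps)
  hence "v \<bullet> (x - P) = 0" using vq by simp
  hence "(fR *\<^sub>R v) \<bullet> x = (fR *\<^sub>R v) \<bullet> P" by (simp add: inner_diff_right)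
  thus False using gt by linarith
qed



lemma two_open_col:
  fixes P Q R x :: complex
  assumes "x \<in> open_segment P Q" "x \<in> open_segment Q R"
  shows "collinear {P,Q,R}"
proof -
  have c1: "collinear {P,Q,x}"
  proof (rule collinear_subset)
    show "{P,Q,x} \<subseteq> closed_segment P Q" using assms(1) open_closed_segment by auto
  qed simp
  have c2: "collinear {Q,x,R}"
  proof (rule collinear_subset)
    show "{Q,x,R} \<subseteq> closed_segment Q R" using assms(2) open_closed_segment by auto
  qed simp
  have "Q \<noteq> x" using assms(2) by (auto simp: open_segment_def)
  thus ?thesis using collinear_3_trans[OF c1 c2] by simp
qed

lemma edge_unique:
  fixes A B C x u u' :: complex
  assumes "\<not> collinear {A,B,C}" "on_edge_interior A B C x u" "on_edge_interior A B C x u'"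
  shows "(u / of_real (norm u))^2 = (u' / of_real (norm u'))^2"
proof -
  have n1: "\<not> (x \<in> open_segment A B \<and> x \<in> open_segment B C)"
    using two_open_col[of x A B C] assms(1) by auto
  have n2: "\<not> (x \<in> open_segment B C \<and> x \<in> open_segment C A)"
    using two_open_col[of x B C A] assms(1) by (auto simp: insert_commute)
  have n3: "\<not> (x \<in> open_segment C A \<and> x \<in> open_segment A B)"
    using two_open_col[of x C A B] assms(1) by (auto simp: insert_commute)
  show ?thesis using assms(2,3) n1 n2 n3 unfolding on_edge_interior_def by auto
qed

lemma determinism:
  fixes x y1 y2 :: complex
  assumes "x \<noteq> y1" "x \<noteq> y2"
    and "(y1 - x) / of_real (norm (y1 - x)) = (y2 - x) / of_real (norm (y2 - x))"
    and "open_segment x y1 \<subseteq> S" "open_segment x y2 \<subseteq> S" "y1 \<notin> S" "y2 \<notin> S"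
  shows "y1 = y2"
proof -
  define d where "d = (y1 - x) / of_real (norm (y1 - x))"
  define t1 where "t1 = norm (y1 - x)"
  define t2 where "t2 = norm (y2 - x)"
  have t1p: "t1 > 0" "t2 > 0" using assms(1,2) unfolding t1_def t2_def by auto
  have e1: "y1 = x + of_real t1 * d" using t1p unfolding d_def t1_def by (simp add: field_simps)
  have e2: "y2 = x + of_real t2 * d" using t1p assms(3) unfolding d_def t2_def by (simp add: field_simps)
  have key: "\<And>ya yb ta tb. ya = x + of_real ta * d \<Longrightarrow> yb = x + of_real tb * d \<Longrightarrow> 0 < ta \<Longrightarrow> ta < tb
      \<Longrightarrow> x \<noteq> yb \<Longrightarrow> ya \<in> open_segment x yb"
  proof -
    fix ya yb ta tb
    assume h: "ya = x + of_real ta * d" "yb = x + of_real tb * d" "0 < ta" "ta < tb" "x \<noteq> yb"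
    define v where "v = ta / tb"
    have "0 < v" "v < 1" using h unfolding v_def by (auto simp: field_simps)
    moreover have "ya = (1 - v) *\<^sub>R x + v *\<^sub>R yb" using h unfolding v_def
      by (simp add: scaleR_conv_of_real field_simps)
    ultimately show "ya \<in> open_segment x yb" using h(5) unfolding in_segment(2) by blast
  qed
  show ?thesis
  proof (rule ccontr)
    assume ne: "y1 \<noteq> y2"
    hence "t1 \<noteq> t2" using e1 e2 by auto
    hence "t1 < t2 \<or> t2 < t1" by linarith
    thus False
    proof
      assume "t1 < t2"
      hence "y1 \<in> open_segment x y2" using key[OF e1 e2] t1p assms(2) by blast
      thus False using assms(5,6) by auto
    next
      assume "t2 < t1"
      hence "y2 \<in> open_segment x y1" using key[OF e2 e1] t1p assms(1) by blast
      thus False using assms(4,7) by auto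
    qed
  qed
qed



lemma angle_cis:
  fixes P Q R :: complex
  assumes "P \<noteq> Q" "R \<noteq> Q" "vertex_angle P Q R = \<gamma>" "0 \<le> \<gamma>" "\<gamma> \<le> pi"
  shows "((R - Q) / of_real (norm (R - Q))) * cnj ((P - Q) / of_real (norm (P - Q))) = cis \<gamma> \<or>
         ((R - Q) / of_real (norm (R - Q))) * cnj ((P - Q) / of_real (norm (P - Q))) = cis (-\<gamma>)"
proof -
  define x where "x = ((P - Q) \<bullet> (R - Q)) / (norm (P - Q) * norm (R - Q))"
  have np: "norm (P - Q) > 0" "norm (R - Q) > 0" using assms by auto
  have "\<bar>(P - Q) \<bullet> (R - Q)\<bar> \<le> norm (P - Q) * norm (R - Q)" by (rule Cauchy_Schwarz_ineq2)
  hence "\<bar>x\<bar> \<le> 1" unfolding x_def using np by (simp add: abs_div divide_le_eq_1 abs_mult)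
  hence "cos \<gamma> = x" using assms(3) unfolding vertex_angle_def x_def[symmetric]
    by (metis abs_le_iff cos_arccos minus_le_iff)
  define z where "z = ((R - Q) / of_real (norm (R - Q))) * cnj ((P - Q) / of_real (norm (P - Q)))"
  have "Re z = x" unfolding z_def x_def inner_complex_def using np
    by (simp add: field_simps)
  moreover have "norm z = 1" unfolding z_def using np by (simp add: norm_mult norm_divide flip: complex_cnj_diff)
  ultimately show ?thesis using unit_cos[of z \<gamma>] assms \<open>cos \<gamma> = x\<close> unfolding z_def by auto
qed

lemma unit_cnj: "norm (a::complex) = 1 \<Longrightarrow> a * cnj a = 1"
  by (metis complex_norm_square mult.commute of_real_1 power_one)

lemma refl_Phi:
  fixes a u z :: complex
  assumes "norm a = 1" "((u / of_real (norm u))^2)^n = (a^2)^n"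
  shows "(reflect_dir u z * cnj a)^n = cnj ((z * cnj a)^n)"
proof -
  have "(reflect_dir u z * cnj a)^n = ((u / of_real (norm u))^2)^n * (cnj z)^n * (cnj a)^n"
    unfolding reflect_dir_def by (simp add: power_mult_distrib)
  also have "\<dots> = (cnj z)^n * (a * (a * cnj a))^n" using assms(2)
    by (simp add: power_mult_distrib power2_eq_square)
  also have "\<dots> = cnj ((z * cnj a)^n)" using unit_cnj[OF assms(1)] by (simp add: power_mult_distrib)
  finally show ?thesis .
qed

lemma comb_alg:
  fixes v w nb ncc N :: real and a1 a2 Z :: complex
  assumes "N > 0" "a1 * cnj a1 = 1" "a2 * cnj a1 = Z"
  shows "(of_real v * (of_real nb * a1) + of_real w * (of_real ncc * a2)) * cnj a1 / of_real N
     = of_real (v * nb/N) + of_real (w * ncc/N) * Z"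
proof -
  have "(of_real v * (of_real nb * a1) + of_real w * (of_real ncc * a2)) * cnj a1
     = of_real v * of_real nb * (a1 * cnj a1) + of_real w * of_real ncc * (a2 * cnj a1)"
    by (simp only: distrib_right mult.assoc)
  also have "\<dots> = of_real (v * nb) + of_real (w * ncc) * Z" using assms by simp
  finally show ?thesis using assms(1) by (simp add: add_divide_distrib)
qed

lemma dir_in_angle:
  fixes A B C x a1 a2 :: complex
  assumes nc: "\<not> collinear {A,B,C}" and xT: "x \<in> convex hull {A,B,C}" and xA: "x \<noteq> A"
    and seg: "open_segment A x \<subseteq> interior (convex hull {A,B,C})"
    and a1: "a1 = (B - A) / of_real (norm (B - A))" and a2: "a2 = (C - A) / of_real (norm (C - A))"
    and s: "s = 1 \<or> s = -1" and z: "a2 * cnj a1 = cis (s * c)" and c: "0 < c" "c < pi"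
  shows "\<exists>\<theta>. 0 < \<theta> \<and> \<theta> < c \<and> (x - A) / of_real (norm (x - A)) * cnj a1 = cis (s * \<theta>)"
proof -
  obtain u v w where uvw: "0 \<le> u" "0 \<le> v" "0 \<le> w" "u + v + w = 1"
       "x = u *\<^sub>R A + v *\<^sub>R B + w *\<^sub>R C" using xT unfolding convex_hull_3 by auto
  have ueq: "u = 1 - v - w" using uvw by simp
  have xA': "x - A = of_real v * (B - A) + of_real w * (C - A)" using uvw(5)
    by (simp add: ueq algebra_simps scaleR_conv_of_real)
  define m where "m = (1/2) *\<^sub>R A + (1/2) *\<^sub>R x"
  have "m \<in> open_segment A x" unfolding m_def in_segment(2) using xA
    by (intro conjI exI[of _ "1/2"]) auto
  hence mi: "m \<in> interior (convex hull {A,B,C})" using seg by auto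
  have AB: "A \<noteq> B" "A \<noteq> C" using nc by (auto simp: collinear_2 insert_commute)
  have vp: "v > 0"
  proof (rule ccontr)
    assume "\<not> v > 0" hence v0: "v = 0" using uvw by simp
    have "m = A + (1/2) * (x - A)" unfolding m_def by (simp add: scaleR_conv_of_real field_simps)
    also have "\<dots> = A + (1/2) * (of_real w * (C - A))" using xA' v0 by simp
    also have "\<dots> = (1 - w/2) *\<^sub>R A + (w/2) *\<^sub>R C" by (simp add: scaleR_conv_of_real algebra_simps)
    finally have "m = (1 - w/2) *\<^sub>R A + (w/2) *\<^sub>R C" .
    hence "m \<in> closed_segment A C" unfolding in_segment(1) using uvw
      by (intro exI[of _ "w/2"]) auto
    moreover have "\<not> collinear {A,C,B}" using nc by (simp add: insert_commute)
    ultimately have "m \<notin> interior (convex hull {A,C,B})" by (intro edge_not_interior)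
    thus False using mi by (simp add: insert_commute)
  qed
  have wp: "w > 0"
  proof (rule ccontr)
    assume "\<not> w > 0" hence w0: "w = 0" using uvw by simp
    have "m = A + (1/2) * (x - A)" unfolding m_def by (simp add: scaleR_conv_of_real field_simps)
    also have "\<dots> = A + (1/2) * (of_real v * (B - A))" using xA' w0 by simp
    also have "\<dots> = (1 - v/2) *\<^sub>R A + (v/2) *\<^sub>R B" by (simp add: scaleR_conv_of_real algebra_simps)
    finally have "m = (1 - v/2) *\<^sub>R A + (v/2) *\<^sub>R B" .
    hence "m \<in> closed_segment A B" unfolding in_segment(1) using uvw
      by (intro exI[of _ "v/2"]) auto
    hence "m \<notin> interior (convex hull {A,B,C})" by (intro edge_not_interior nc)
    thus False using mi by simp
  qed
  have na1: "norm a1 = 1" using a1 AB by (simp add: norm_divide)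
  have c1: "a1 * cnj a1 = 1" using unit_cnj[OF na1] .
  define N where "N = norm (x - A)"
  have Np: "N > 0" using xA unfolding N_def by simp
  define \<alpha> where "\<alpha> = v * norm (B - A) / N"
  define \<beta> where "\<beta> = w * norm (C - A) / N"
  have ap: "\<alpha> > 0" "\<beta> > 0" unfolding \<alpha>_def \<beta>_def using vp wp Np AB by auto
  define y where "y = (x - A) / of_real N * cnj a1"
  define nb where "nb = norm (B - A)"
  define nc' where "nc' = norm (C - A)"
  have Bd: "B - A = of_real nb * a1" using a1 AB unfolding nb_def by simp
  have Cd: "C - A = of_real nc' * a2" using a2 AB unfolding nc'_def by simp
  have "y = (of_real v * (B - A) + of_real w * (C - A)) * cnj a1 / of_real N"
    unfolding y_def xA' by (simp only: times_divide_eq_left)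
  also have "\<dots> = (of_real v * (of_real nb * a1) + of_real w * (of_real nc' * a2)) * cnj a1 / of_real N"
    unfolding Bd Cd by (rule refl)
  also have "\<dots> = of_real \<alpha> + of_real \<beta> * cis (s * c)" unfolding \<alpha>_def \<beta>_def nb_def[symmetric] nc'_def[symmetric]
    by (rule comb_alg[OF Np c1 z])
  finally have yeq: "y = of_real \<alpha> + of_real \<beta> * cis (s * c)" .
  have ny: "norm y = 1" unfolding y_def N_def using na1 xA by (simp add: norm_mult norm_divide)
  from s show ?thesis
  proof
    assume s1: "s = 1"
    have yc: "y = of_real \<alpha> + of_real \<beta> * cis c" using yeq s1 by simp
    obtain \<theta> where th: "0 < \<theta>" "\<theta> < c" "y = cis \<theta>" using pos_comb_arg[OF ny yc ap c] by blast
    show ?thesis by (rule exI[of _ \<theta>]) (use th s1 in \<open>simp add: y_def N_def\<close>)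
  next
    assume s1: "s = -1"
    have yc: "cnj y = of_real \<alpha> + of_real \<beta> * cis c" using yeq s1 by (simp add: cis_cnj)
    have ny': "norm (cnj y) = 1" using ny by simp
    obtain \<theta> where th: "0 < \<theta>" "\<theta> < c" "cnj y = cis \<theta>" using pos_comb_arg[OF ny' yc ap c] by blast
    have "y = cis (- \<theta>)" by (metis th(3) cis_cnj complex_cnj_cnj)
    show ?thesis by (rule exI[of _ \<theta>]) (use th s1 \<open>y = cis (- \<theta>)\<close> in \<open>simp add: y_def N_def\<close>)
  qed
qed



lemma rot_pow:
  fixes b1 b2 :: complex
  assumes "norm b1 = 1" "(((b2 * cnj b1))^n)^2 = 1"
  shows "(b2^2)^n = (b1^2)^n"
proof -
  define z where "z = b2 * cnj b1"
  have e: "b2 = z * b1" unfolding z_def using unit_cnj[OF assms(1)] by (simp add: mult.assoc mult.commute)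
  have "(b2^2)^n = (z^2)^n * (b1^2)^n" unfolding e by (simp only: power_mult_distrib)
  also have "(z^2)^n = (z^n)^2" by (simp add: power_mult[symmetric] mult.commute)
  finally show ?thesis using assms(2) unfolding z_def by simp
qed

lemma cis_pow_sq:
  assumes "real n * x = of_int j * pi"
  shows "((cis x)^n)^2 = 1"
proof -
  have "((cis x)^n)^2 = cis (real 2 * (real n * x))" by (simp only: Complex.DeMoivre flip: power_mult)
  also have "\<dots> = cis (2 * pi * of_int j)" using assms by (simp add: algebra_simps)
  also have "\<dots> = 1" by (rule cis_multiple_2pi) simp
  finally show ?thesis .
qed



lemma edge_pt:
  assumes nc: "\<not> collinear {A,B,C}" and oe: "on_edge_interior A B C x u"
  shows "x \<in> convex hull {A,B,C} \<and> x \<notin> interior (convex hull {A,B,C}) \<and> u \<noteq> 0"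
proof -
  have s1: "{B,C,A} = {A,B,C}" "{C,A,B} = {A,B,C}" by auto
  have g: "\<And>P Q R. {P,Q,R} = {A,B,C} \<Longrightarrow> x \<in> open_segment P Q \<Longrightarrow> u = Q - P \<Longrightarrow>
     x \<in> convex hull {A,B,C} \<and> x \<notin> interior (convex hull {A,B,C}) \<and> u \<noteq> 0"
  proof -
    fix P Q R assume h: "{P,Q,R} = {A,B,C}" "x \<in> open_segment P Q" "u = Q - P"
    have nc': "\<not> collinear {P,Q,R}" using nc h(1) by simp
    have xc: "x \<in> closed_segment P Q" using h(2) open_closed_segment by blast
    have "closed_segment P Q \<subseteq> convex hull {P,Q,R}" unfolding segment_convex_hull by (rule hull_mono) auto
    hence "x \<in> convex hull {A,B,C}" using xc h(1) by auto
    moreover have "x \<notin> interior (convex hull {A,B,C})" using edge_not_interior[OF nc' xc] h(1) by simp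
    moreover have "P \<noteq> Q" using h(2) by auto
    ultimately show "x \<in> convex hull {A,B,C} \<and> x \<notin> interior (convex hull {A,B,C}) \<and> u \<noteq> 0"
      using h(3) by simp
  qed
  show ?thesis using oe unfolding on_edge_interior_def
  proof (elim disjE conjE)
    assume "x \<in> open_segment A B" "u = B - A" thus ?thesis by (intro g[of A B C]) auto
  next
    assume "x \<in> open_segment B C" "u = C - B" thus ?thesis by (intro g[of B C A]) (auto simp: s1)
  next
    assume "x \<in> open_segment C A" "u = A - C" thus ?thesis by (intro g[of C A B]) (auto simp: s1)
  qed
qed

lemma refl_rev:
  fixes u u' z wj wi' :: complex
  assumes "u \<noteq> 0" "(u / of_real (norm u))^2 = (u' / of_real (norm u'))^2"
    and "wi' = reflect_dir u' z" "wj = - wi'"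
  shows "reflect_dir u wj = - z"
proof -
  define E where "E = (u / of_real (norm u))^2"
  have nE: "norm E = 1" unfolding E_def using assms(1) by (simp add: norm_power norm_divide)
  have cE: "E * cnj E = 1" by (rule unit_cnj[OF nE])
  have wjE: "wj = - (E * cnj z)" using assms(2-4) unfolding reflect_dir_def E_def by simp
  have "reflect_dir u wj = E * cnj (- (E * cnj z))" unfolding reflect_dir_def E_def wjE by simp
  also have "\<dots> = - ((E * cnj E) * z)" by (simp add: mult.assoc)
  also have "\<dots> = - z" using cE by simp
  finally show ?thesis .
qed



theorem mainTheorem8:
  fixes A B C :: complex and n m :: nat
  assumes "\<not> collinear {A, B, C}"
    and "vertex_angle B A C = pi / real n"
    and "vertex_angle A B C = real m * pi / real n"
    and "even n" and "0 < m" and "m + 1 < n"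
  shows "\<not> (\<exists>k p. billiard_return_A A B C k p)"
proof
  assume "\<exists>k p. billiard_return_A A B C k p"
  then obtain k p where bil: "billiard_return_A A B C k p" by blast
  note nc = assms(1)
  define T where "T = convex hull {A,B,C}"
  have k1: "k \<ge> 1" and p0: "p 0 = A" and pk: "p k = A"
    and segs: "\<And>i. i < k \<Longrightarrow> p i \<noteq> p (Suc i) \<and> open_segment (p i) (p (Suc i)) \<subseteq> interior T"
    and refl: "\<And>i. 0 < i \<Longrightarrow> i < k \<Longrightarrow> (\<exists>u. on_edge_interior A B C (p i) u \<and>
        (p (Suc i) - p i) / of_real (norm (p (Suc i) - p i)) =
          reflect_dir u ((p i - p (i - 1)) / of_real (norm (p i - p (i - 1)))))"
    using bil unfolding billiard_return_A_def T_def by blast+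
  define w where "w i = (p (Suc i) - p i) / of_real (norm (p (Suc i) - p i))" for i
  have refl': "\<exists>u. on_edge_interior A B C (p i) u \<and> w i = reflect_dir u (w (i - 1))"
    if "0 < i" "i < k" for i
  proof -
    have si: "Suc (i - 1) = i" using that by simp
    show ?thesis using refl[OF that] unfolding w_def si .
  qed
  have AB: "A \<noteq> B" "B \<noteq> C" "A \<noteq> C" using nc by (auto simp: collinear_2 insert_commute)
  have n4: "n > 1" using assms(6) by simp
  have npos: "real n > 0" using n4 by simp
  have c0: "0 < pi / real n" using npos by simp
  have c1: "pi / real n < pi" using n4 by (simp add: divide_less_eq)
  have cm: "real m * pi / real n \<le> pi" using assms(6) npos by (simp add: divide_le_eq)
  define a1 where "a1 = (B - A) / of_real (norm (B - A))"
  define a2 where "a2 = (C - A) / of_real (norm (C - A))"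
  have na1: "norm a1 = 1" unfolding a1_def using AB by (simp add: norm_divide)
  have ca1: "cnj a1 \<noteq> 0" using na1 by auto
  have angA: "a2 * cnj a1 = cis (pi / real n) \<or> a2 * cnj a1 = cis (- (pi / real n))"
    unfolding a1_def a2_def using angle_cis[of B A C "pi / real n"] AB assms(2) c0 c1 by auto
  obtain s :: real where s: "s = 1 \<or> s = -1" and sz: "a2 * cnj a1 = cis (s * (pi / real n))"
    using angA by (metis mult_1 mult_minus1)
  define b1 where "b1 = (A - B) / of_real (norm (A - B))"
  define b2 where "b2 = (C - B) / of_real (norm (C - B))"
  have angB: "b2 * cnj b1 = cis (real m * pi / real n) \<or> b2 * cnj b1 = cis (- (real m * pi / real n))"
    unfolding b1_def b2_def using angle_cis[of A B C "real m * pi / real n"] AB assms(3) cm by auto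
  have b1a: "b1 = - a1" unfolding a1_def b1_def by (simp add: norm_minus_commute minus_divide_left)
  have nb1: "norm b1 = 1" using na1 b1a by simp
  have powB: "((b2 * cnj b1)^n)^2 = 1"
  proof -
    have "real n * (real m * pi / real n) = of_int (int m) * pi" using npos by simp
    moreover have "real n * (- (real m * pi / real n)) = of_int (- int m) * pi" using npos by simp
    ultimately show ?thesis using angB cis_pow_sq by metis
  qed
  have powA: "((a2 * cnj a1)^n)^2 = 1"
  proof -
    have "real n * (pi / real n) = of_int 1 * pi" using npos by simp
    moreover have "real n * (- (pi / real n)) = of_int (- 1) * pi" using npos by simp
    ultimately show ?thesis using angA cis_pow_sq by metis
  qed
  have eB: "(b2^2)^n = (a1^2)^n" using rot_pow[OF nb1 powB] b1a by simp
  have eA: "(a2^2)^n = (a1^2)^n" using rot_pow[OF na1 powA] .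
  have edgepow: "((u / of_real (norm u))^2)^n = (a1^2)^n" if "on_edge_interior A B C x u" for x u
    using that unfolding on_edge_interior_def
  proof (elim disjE conjE)
    assume "u = B - A" thus ?thesis unfolding a1_def by simp
  next
    assume "u = C - B" thus ?thesis using eB unfolding b2_def by simp
  next
    assume "u = A - C"
    hence "u / of_real (norm u) = - a2" unfolding a2_def by (simp add: norm_minus_commute minus_divide_left)
    thus ?thesis using eA by simp
  qed
  define Phi where "Phi z = (z * cnj a1)^n" for z
  have step: "Phi (w i) = cnj (Phi (w (i - 1)))" if h: "0 < i" "i < k" for i
  proof -
    obtain u where u: "on_edge_interior A B C (p i) u" "w i = reflect_dir u (w (i - 1))"
      using refl'[OF h] by blast
    show ?thesis unfolding Phi_def u(2) by (rule refl_Phi[OF na1 edgepow[OF u(1)]])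
  qed
  have inv: "i < k \<longrightarrow> Phi (w i) = (if even i then Phi (w 0) else cnj (Phi (w 0)))" for i
  proof (induction i)
    case 0 show ?case by simp
  next
    case (Suc i)
    show ?case
    proof
      assume "Suc i < k"
      hence "Phi (w (Suc i)) = cnj (Phi (w i))" using step[of "Suc i"] by simp
      thus "Phi (w (Suc i)) = (if even (Suc i) then Phi (w 0) else cnj (Phi (w 0)))"
        using Suc \<open>Suc i < k\<close> by auto
    qed
  qed
  have ptT: "p i \<in> T \<and> p i \<notin> interior T" if h: "0 < i" "i < k" for i
  proof -
    obtain u where "on_edge_interior A B C (p i) u" using refl'[OF h] by blast
    thus ?thesis using edge_pt[OF nc] unfolding T_def by blast
  qed
  have Anot: "A \<notin> interior T" unfolding T_def by (rule edge_not_interior[OF nc]) simp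
  have notint: "p i \<notin> interior T" if "i \<le> k" for i
  proof (cases "0 < i \<and> i < k")
    case True thus ?thesis using ptT by blast
  next
    case False hence "i = 0 \<or> i = k" using that by auto
    thus ?thesis using p0 pk Anot by auto
  qed
  have k2: "k \<ge> 2"
  proof (rule ccontr)
    assume "\<not> k \<ge> 2" hence "k = 1" using k1 by simp
    thus False using segs[of 0] p0 pk by simp
  qed
  have p1T: "p 1 \<in> T" using ptT[of 1] k2 by simp
  have p1A: "p 1 \<noteq> A" using segs[of 0] k2 p0 by auto
  have seg0: "open_segment A (p 1) \<subseteq> interior T" using segs[of 0] k2 p0 by simp
  obtain th0 where th0: "0 < th0" "th0 < pi / real n"
      "(p 1 - A) / of_real (norm (p 1 - A)) * cnj a1 = cis (s * th0)"
    using dir_in_angle[OF nc p1T[unfolded T_def] p1A seg0[unfolded T_def] a1_def a2_def s sz c0 c1] by blast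
  have w0: "w 0 = (p 1 - A) / of_real (norm (p 1 - A))" unfolding w_def using p0 by simp
  define q where "q = p (k - 1)"
  have sk: "Suc (k - 1) = k" using k2 by simp
  have qT: "q \<in> T" unfolding q_def using ptT[of "k - 1"] k2 by simp
  have qA: "q \<noteq> A" unfolding q_def using segs[of "k - 1"] k2 pk sk by auto
  have segq: "open_segment A q \<subseteq> interior T" unfolding q_def using segs[of "k - 1"] k2 pk sk
    by (simp add: open_segment_commute)
  obtain th1 where th1: "0 < th1" "th1 < pi / real n"
      "(q - A) / of_real (norm (q - A)) * cnj a1 = cis (s * th1)"
    using dir_in_angle[OF nc qT[unfolded T_def] qA segq[unfolded T_def] a1_def a2_def s sz c0 c1] by blast
  define dl where "dl = (q - A) / of_real (norm (q - A))"
  have wl: "w (k - 1) = - dl" unfolding w_def dl_def q_def sk pk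
    by (simp add: norm_minus_commute minus_divide_left)
  have Phi0: "Phi (w 0) = cis (s * th0) ^ n" unfolding Phi_def w0 using th0(3) by simp
  have Phil: "Phi (w (k - 1)) = cis (s * th1) ^ n"
  proof -
    have "Phi (w (k - 1)) = (- (dl * cnj a1)) ^ n" unfolding Phi_def wl by simp
    also have "\<dots> = (dl * cnj a1) ^ n" using assms(4) by simp
    finally show ?thesis using th1(3) unfolding dl_def by simp
  qed
  have cisneg: "cis (- t) ^ n = cnj (cis t ^ n)" for t
    by (simp add: cis_cnj[symmetric] complex_cnj_power)
  have ev: "even (k - 1)"
  proof (rule ccontr)
    assume od: "odd (k - 1)"
    have X: "cis (s * th1) ^ n = cnj (cis (s * th0) ^ n)" using inv[of "k - 1"] od k2 Phi0 Phil by simp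
    have I1: "Im (cis th1 ^ n) > 0" "Im (cis th0 ^ n) > 0" using cis_pow_Im th0 th1 n4 by auto
    from s show False
    proof
      assume s1: "s = 1"
      have "Im (cis th1 ^ n) = - Im (cis th0 ^ n)" using arg_cong[where f=Im, OF X] s1
        by (simp del: complex_cnj_power)
      thus False using I1 by simp
    next
      assume s1: "s = -1"
      have X': "cnj (cis th1 ^ n) = cnj (cnj (cis th0 ^ n))" using X unfolding s1 by (simp only: mult_minus1 cisneg)
      have "- Im (cis th1 ^ n) = Im (cis th0 ^ n)" using arg_cong[where f=Im, OF X']
        by (simp del: complex_cnj_power)
      thus False using I1 by simp
    qed
  qed
  have eqth: "th0 = th1"
  proof -
    have e: "cis (s * th1) ^ n = cis (s * th0) ^ n" using inv[of "k - 1"] ev k2 Phi0 Phil by simp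
    have "cis th1 ^ n = cis th0 ^ n" using s
    proof
      assume "s = 1" thus ?thesis using e by simp
    next
      assume s1: "s = -1" thus ?thesis using e unfolding s1 by (simp only: mult_minus1 cisneg complex_cnj_cancel_iff)
    qed
    thus ?thesis using cis_pow_inj[OF th1(1,2) th0(1,2)] n4 by simp
  qed
  have w0dl: "w 0 = dl"
  proof -
    have e1: "w 0 * cnj a1 = cis (s * th0)" using th0(3) unfolding w0 .
    have e2: "dl * cnj a1 = cis (s * th1)" using th1(3) unfolding dl_def .
    have "w 0 * cnj a1 = dl * cnj a1" unfolding e1 e2 eqth ..
    thus ?thesis using ca1 by (simp only: mult_cancel_right) simp
  qed
  have rev: "Suc j \<le> k \<longrightarrow> p j = p (k - j) \<and> p (Suc j) = p (k - Suc j)" for j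
  proof (induction j)
    case 0
    show ?case
    proof
      assume "Suc 0 \<le> k"
      have "p 1 = q"
      proof (rule determinism[of A "p 1" q])
        show "A \<noteq> p 1" using p1A by simp
        show "A \<noteq> q" using qA by simp
        show "(p 1 - A) / of_real (norm (p 1 - A)) = (q - A) / of_real (norm (q - A))"
          using w0dl w0 unfolding dl_def by simp
        show "open_segment A (p 1) \<subseteq> interior T" by (rule seg0)
        show "open_segment A q \<subseteq> interior T" by (rule segq)
        show "p 1 \<notin> interior T" using notint[of 1] k2 by simp
        show "q \<notin> interior T" using notint[of "k - 1"] unfolding q_def by simp
      qed
      thus "p 0 = p (k - 0) \<and> p (Suc 0) = p (k - Suc 0)" using p0 pk unfolding q_def by simp
    qed
  next
    case (Suc j)
    show ?case
    proof
      assume le: "Suc (Suc j) \<le> k"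
      have IH: "p j = p (k - j)" "p (Suc j) = p (k - Suc j)" using Suc le by auto
      define i where "i = Suc j"
      define i' where "i' = k - Suc j"
      have ii: "0 < i" "i < k" "0 < i'" "i' < k" using le unfolding i_def i'_def by auto
      have si': "Suc i' = k - j" "Suc (i' - 1) = i'" "i' - 1 = k - Suc (Suc j)" using le unfolding i'_def by auto
      have pii: "p i = p i'" using IH unfolding i_def i'_def by simp
      obtain u where u: "on_edge_interior A B C (p i) u" "w i = reflect_dir u (w (i - 1))"
        using refl'[OF ii(1,2)] by blast
      obtain u' where u': "on_edge_interior A B C (p i') u'" "w i' = reflect_dir u' (w (i' - 1))"
        using refl'[OF ii(3,4)] by blast
      have E: "(u / of_real (norm u))^2 = (u' / of_real (norm u'))^2"
        using edge_unique[OF nc u(1)] u'(1) pii by simp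
      have u0: "u \<noteq> 0" using edge_pt[OF nc u(1)] by simp
      have wj: "w (i - 1) = - w i'"
      proof -
        have "w i' = (p j - p (Suc j)) / of_real (norm (p j - p (Suc j)))"
          unfolding w_def si'(1) using IH unfolding i'_def by simp
        thus ?thesis unfolding w_def i_def by (simp add: norm_minus_commute minus_divide_left)
      qed
      have wi: "w i = - w (i' - 1)" using refl_rev[OF u0 E u'(2) wj] u(2) by simp
      have "p (Suc i) = p (i' - 1)"
      proof (rule determinism[of "p i" "p (Suc i)" "p (i' - 1)"])
        show "p i \<noteq> p (Suc i)" using segs[OF ii(2)] by simp
        show "p i \<noteq> p (i' - 1)" using segs[of "i' - 1"] ii si'(2) pii by auto
        have "(p (i' - 1) - p i) / of_real (norm (p (i' - 1) - p i)) = - w (i' - 1)"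
          unfolding w_def si'(2) pii by (simp add: norm_minus_commute minus_divide_left)
        thus "(p (Suc i) - p i) / of_real (norm (p (Suc i) - p i)) =
              (p (i' - 1) - p i) / of_real (norm (p (i' - 1) - p i))"
          using wi unfolding w_def by simp
        show "open_segment (p i) (p (Suc i)) \<subseteq> interior T" using segs[OF ii(2)] by simp
        show "open_segment (p i) (p (i' - 1)) \<subseteq> interior T"
          using segs[of "i' - 1"] ii si'(2) pii by (auto simp: open_segment_commute)
        show "p (Suc i) \<notin> interior T" using notint[of "Suc i"] ii by simp
        show "p (i' - 1) \<notin> interior T" using notint[of "i' - 1"] ii by simp
      qed
      thus "p (Suc j) = p (k - Suc j) \<and> p (Suc (Suc j)) = p (k - Suc (Suc j))"
        using IH si'(3) unfolding i_def by simp
    qed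
  qed
  from ev obtain h where "k - 1 = 2 * h" by (rule evenE)
  hence kh: "k = Suc (2 * h)" using k2 by simp
  have hs: "Suc h \<le> k" "k - Suc h = h" using kh by auto
  have "p (Suc h) = p h" using rev[of h] hs by simp
  thus False using segs[of h] kh by simp
qed


end
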